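(* Let $(Z,d,\nu)$ be a metric measure space satisfying the LLC-1 condition, where $\nu$ is a doubling Borel regular measure. Let $E\subset Z$ be a bounded measurable set, and suppose that there exists $t>0$ such that $\overline{\mathcal{M}}^{-t}(\partial^+E)<\infty$. Then $\chi_E\in B^s_{1,1}(Z)$ for every $s\in(0,1)$ with $s<t$.
   Context: A measure $\nu$ is doubling if there is $C_\nu\ge1$ with $0<\nu(B(x,2r))\le C_\nu\,\nu(B(x,r))<\infty$ for all $x\in Z$, $r>0$. $Z$ satisfies the LLC-1 condition if there is $C_L\ge1$ such that for all $x\in Z$ and $r>0$, any two points of $B(x,r)$ can be joined by a connected set contained in $B(x,C_Lr)$. The regularized boundary $\partial^+E$ is the set of $x\in Z$ such that $\nu(B(x,r)\cap E)>0$ and $\nu(B(x,r)\setminus E)>0$ for all $r>0$. For $A\subset Z$, $t>0$, $r>0$, the codimension $t$ Minkowski $r$-content is $\mathcal{M}^{-t}_r(A)=\inf\{r^{-t}\sum_i\nu(B(x_i,r)): A\subset\bigcup_i B(x_i,r),\ x_i\in A\}$ (countable covers), and the codimension $t$ upper Minkowski content is $\overline{\mathcal{M}}^{-t}(A)=\limsup_{r\to0^+}\mathcal{M}^{-t}_r(A)$. For $0<s<1$, the Besov space $B^s_{1,1}(Z)$ consists of those $u\in L^1(Z)$ with $\|u\|_{B^s_{1,1}(Z)}=\int_Z\int_Z\frac{|u(y)-u(x)|}{d(x,y)^s\,\nu(B(x,d(x,y)))}\,d\nu(y)\,d\nu(x)<\infty$. *)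

theory Defs
  imports "HOL-Analysis.Analysis"
begin

definition doubling_measure :: "'a::metric_space measure \<Rightarrow> bool" where
  "doubling_measure M \<longleftrightarrow> (\<exists>C::real. C \<ge> 1 \<and>
     (\<forall>x r. r > 0 \<longrightarrow> 0 < emeasure M (ball x (2*r)) \<and>
        emeasure M (ball x (2*r)) \<le> ennreal C * emeasure M (ball x r) \<and>
        emeasure M (ball x r) < \<infinity>))"

definition borel_regular :: "'a::metric_space measure \<Rightarrow> bool" where
  "borel_regular M \<longleftrightarrow> space M = UNIV \<and> sets borel \<subseteq> sets M \<and>
     (\<forall>A\<in>sets M. \<exists>B\<in>sets borel. A \<subseteq> B \<and> emeasure M A = emeasure M B)"

definition LLC1 :: "'a::metric_space set \<Rightarrow> bool" where
  "LLC1 Z \<longleftrightarrow> (\<exists>CL::real. CL \<ge> 1 \<and>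
     (\<forall>x\<in>Z. \<forall>r>0. \<forall>y\<in>ball x r \<inter> Z. \<forall>z\<in>ball x r \<inter> Z.
        \<exists>K. connected K \<and> y \<in> K \<and> z \<in> K \<and> K \<subseteq> ball x (CL*r) \<inter> Z))"

definition reg_boundary :: "'a::metric_space measure \<Rightarrow> 'a set \<Rightarrow> 'a set" where
  "reg_boundary M E = {x. \<forall>r>0. emeasure M (ball x r \<inter> E) > 0 \<and> emeasure M (ball x r - E) > 0}"

definition minkowski_r_content :: "'a::metric_space measure \<Rightarrow> real \<Rightarrow> real \<Rightarrow> 'a set \<Rightarrow> ennreal" where
  "minkowski_r_content M t r A =
     (INF X \<in> {X. countable X \<and> X \<subseteq> A \<and> A \<subseteq> (\<Union>x\<in>X. ball x r)}.
        ennreal (r powr (-t)) * (\<integral>\<^sup>+ x. emeasure M (ball x r) \<partial>count_space X))"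

definition upper_minkowski_content :: "'a::metric_space measure \<Rightarrow> real \<Rightarrow> 'a set \<Rightarrow> ennreal" where
  "upper_minkowski_content M t A = Limsup (at_right 0) (\<lambda>r. minkowski_r_content M t r A)"

definition besov_norm :: "'a::metric_space measure \<Rightarrow> real \<Rightarrow> ('a \<Rightarrow> real) \<Rightarrow> ennreal" where
  "besov_norm M s u = (\<integral>\<^sup>+ x. (\<integral>\<^sup>+ y. ennreal \<bar>u y - u x\<bar> /
        (ennreal (dist x y powr s) * emeasure M (ball x (dist x y))) \<partial>M) \<partial>M)"

definition in_besov :: "'a::metric_space measure \<Rightarrow> real \<Rightarrow> ('a \<Rightarrow> real) \<Rightarrow> bool" where
  "in_besov M s u \<longleftrightarrow> integrable M u \<and> besov_norm M s u < \<infinity>"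

end

theory Submission
  imports Defs
begin

lemma enn_term_le_suminf: "(f::nat\<Rightarrow>ennreal) i \<le> suminf f"
  by (meson ennreal_suminf_lessD not_le order.irrefl)

lemma enn_geom_bound:
  assumes "\<And>j. f j \<le> ennreal (a * q^j)" "0 \<le> a" "0 \<le> q" "q < 1"
  shows "suminf f \<le> ennreal (a / (1 - q))"
proof -
  have s: "summable (\<lambda>j. a * q^j)"
    using assms by (intro summable_mult summable_geometric) auto
  have "suminf f \<le> (\<Sum>j. ennreal (a * q^j))"
    using assms(1) by (intro suminf_le) auto
  also have "\<dots> = ennreal (\<Sum>j. a * q^j)"
    using s assms by (intro suminf_ennreal2) auto
  also have "(\<Sum>j. a * q^j) = a / (1 - q)"
    using assms by (simp add: suminf_mult suminf_geometric)
  finally show ?thesis .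
qed

lemma series_bound3:
  assumes "AE x in M. f x \<le> (\<Sum>k. ennreal (a k) * indicator (S k) x)
                + (\<Sum>k. ennreal (b k) * indicator (T k) x) + ennreal c * indicator U x"
    and "\<And>k. S k \<in> sets M" "\<And>k. T k \<in> sets M" "U \<in> sets M"
  shows "(\<integral>\<^sup>+x. f x \<partial>M) \<le> (\<Sum>k. ennreal (a k) * emeasure M (S k))
            + (\<Sum>k. ennreal (b k) * emeasure M (T k)) + ennreal c * emeasure M U"
proof -
  have mS: "(\<lambda>x. \<Sum>k. ennreal (a k) * indicator (S k) x) \<in> borel_measurable M"
    using assms by (auto intro!: borel_measurable_suminf)
  have mT: "(\<lambda>x. \<Sum>k. ennreal (b k) * indicator (T k) x) \<in> borel_measurable M"
    using assms by (auto intro!: borel_measurable_suminf)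
  have mU: "(\<lambda>x. ennreal c * indicator U x) \<in> borel_measurable M"
    using assms by auto
  have "(\<integral>\<^sup>+x. f x \<partial>M) \<le> (\<integral>\<^sup>+x. (\<Sum>k. ennreal (a k) * indicator (S k) x)
                + (\<Sum>k. ennreal (b k) * indicator (T k) x) + ennreal c * indicator U x \<partial>M)"
    by (rule nn_integral_mono_AE[OF assms(1)])
  also have "\<dots> = (\<integral>\<^sup>+x. (\<Sum>k. ennreal (a k) * indicator (S k) x) \<partial>M)
       + (\<integral>\<^sup>+x. (\<Sum>k. ennreal (b k) * indicator (T k) x) \<partial>M)
       + (\<integral>\<^sup>+x. ennreal c * indicator U x \<partial>M)"
    using mS mT mU by (simp add: nn_integral_add)
  also have "(\<integral>\<^sup>+x. (\<Sum>k. ennreal (a k) * indicator (S k) x) \<partial>M) = (\<Sum>k. ennreal (a k) * emeasure M (S k))"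
    using assms by (subst nn_integral_suminf) (auto simp: nn_integral_cmult_indicator)
  also have "(\<integral>\<^sup>+x. (\<Sum>k. ennreal (b k) * indicator (T k) x) \<partial>M) = (\<Sum>k. ennreal (b k) * emeasure M (T k))"
    using assms by (subst nn_integral_suminf) (auto simp: nn_integral_cmult_indicator)
  also have "(\<integral>\<^sup>+x. ennreal c * indicator U x \<partial>M) = ennreal c * emeasure M U"
    using assms by (simp add: nn_integral_cmult_indicator)
  finally show ?thesis .
qed

lemma connected_meets_gap:
  fixes U V :: "'a::topological_space set"
  assumes "open U" "open V" "U \<inter> V = {}" "connected K" "x \<in> K" "y \<in> K"
    "x \<notin> U" "y \<notin> V"
  shows "\<exists>z\<in>K. z \<notin> U \<and> z \<notin> V"
proof (rule ccontr)
  assume nz: "\<not> (\<exists>z\<in>K. z \<notin> U \<and> z \<notin> V)"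
  then have "K \<subseteq> U \<union> V" by auto
  from connectedD[OF assms(4,1,2) _ this] assms(3)
  have "U \<inter> K = {} \<or> V \<inter> K = {}" by auto
  moreover have "x \<in> V" "y \<in> U" using nz assms by auto
  ultimately show False using assms by auto
qed


lemma dyadic_exists:
  fixes r d :: real
  assumes "0 < r" "r \<le> d"
  shows "\<exists>j. 2^j * r \<le> d \<and> d < 2^(Suc j) * r"
proof -
  obtain n where n: "d / r < 2^n" using real_arch_pow[of 2 "d/r"] by auto
  have "\<exists>n. d < 2^n * r" using n assms by (auto simp: field_simps)
  from exists_least_lemma[where P="\<lambda>n. d < 2^n * r", OF _ this]
  obtain j where "\<not> d < 2^j * r" "d < 2^(Suc j) * r" using assms by auto
  then show ?thesis by (auto simp: not_less ball_empty)
qed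

locale bset =
  fixes M :: "'a::metric_space measure" and C :: real
  assumes space: "space M = UNIV" and borelM: "sets borel \<subseteq> sets M"
  and C1: "1 \<le> C"
  and dbl: "\<And>x r. 0 < r \<Longrightarrow> emeasure M (ball x (2*r)) \<le> ennreal C * emeasure M (ball x r)"
  and pos2: "\<And>x r. 0 < r \<Longrightarrow> 0 < emeasure M (ball x (2*r))"
  and fin: "\<And>x r. 0 < r \<Longrightarrow> emeasure M (ball x r) < \<infinity>"
begin

definition mr :: "'a \<Rightarrow> real \<Rightarrow> real" where "mr x r = measure M (ball x r)"

lemma open_sets: "open S \<Longrightarrow> S \<in> sets M"
  using borelM borel_open by blast

lemma ball_sets[simp]: "ball x r \<in> sets M"
  by (simp add: open_sets)

lemma fin_all: "emeasure M (ball x r) < \<infinity>"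
  using fin[of r x] by (cases "0 < r") (auto simp: not_less ball_empty)

lemma emb: "emeasure M (ball x r) = ennreal (mr x r)"
  unfolding mr_def using fin_all[of x r] by (simp add: emeasure_eq_ennreal_measure less_top)

lemma mr_nonneg: "0 \<le> mr x r"
  by (simp add: mr_def)

lemma mr_pos: "0 < r \<Longrightarrow> 0 < mr x r"
  using pos2[of "r/2" x] emb[of x r] by simp

lemma mr_mono: "r \<le> r' \<Longrightarrow> mr x r \<le> mr x r'"
proof -
  assume "r \<le> r'"
  then have "emeasure M (ball x r) \<le> emeasure M (ball x r')"
    by (intro emeasure_mono) auto
  then show ?thesis using emb mr_nonneg by (simp add: ennreal_le_iff)
qed

lemma mr_dbl: "0 < r \<Longrightarrow> mr x (2*r) \<le> C * mr x r"
  using dbl[of r x] emb[of x r] emb[of x "2*r"] C1 mr_nonneg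
  by (simp add: ennreal_mult'[symmetric] ennreal_le_iff)

lemma A_pt:
  assumes "0 < r" "r \<le> dist x y" "0 \<le> \<kappa>" "0 \<le> s"
  shows "ennreal (\<kappa> / (dist x y powr s * mr x (dist x y))) \<le>
     (\<Sum>j. ennreal (\<kappa> / ((2^j*r) powr s * mr x (2^j*r))) * indicator (ball x (2^(Suc j)*r)) y)"
proof -
  obtain j where j: "2^j * r \<le> dist x y" "dist x y < 2^(Suc j) * r"
    using dyadic_exists[OF assms(1,2)] by auto
  have p: "0 < 2^j * r" using assms by simp
  have "(2^j*r) powr s * mr x (2^j*r) \<le> dist x y powr s * mr x (dist x y)"
    using j p assms mr_pos[OF p, of x] by (intro mult_mono powr_mono2 mr_mono) auto
  moreover have "0 < (2^j*r) powr s * mr x (2^j*r)" using p mr_pos[OF p, of x] by (intro mult_pos_pos) auto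
  ultimately have "\<kappa> / (dist x y powr s * mr x (dist x y)) \<le> \<kappa> / ((2^j*r) powr s * mr x (2^j*r))"
    using assms by (intro divide_left_mono) auto
  then have "ennreal (\<kappa> / (dist x y powr s * mr x (dist x y))) \<le>
     ennreal (\<kappa> / ((2^j*r) powr s * mr x (2^j*r))) * indicator (ball x (2^(Suc j)*r)) y"
    using j by (simp add: ennreal_leI dist_commute del: power_Suc)
  also have "\<dots> \<le> (\<Sum>j. ennreal (\<kappa> / ((2^j*r) powr s * mr x (2^j*r))) * indicator (ball x (2^(Suc j)*r)) y)"
    by (rule enn_term_le_suminf[of "\<lambda>j. ennreal (\<kappa> / ((2^j*r) powr s * mr x (2^j*r))) * indicator (ball x (2^(Suc j)*r)) y"])
  finally show ?thesis .
qed

lemma powr_dyadic: "0 < (r::real) \<Longrightarrow> (2^j * r) powr (-s) = r powr (-s) * (2 powr (-s))^j"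
proof -
  assume r: "0 < r"
  have "(2^j * r) powr (-s) = (2^j) powr (-s) * r powr (-s)" using r by (simp add: powr_mult)
  moreover have "((2::real)^j) powr (-s) = (2 powr (-s))^j"
  proof -
    have "((2::real)^j) powr (-s) = (2 powr (real j)) powr (-s)" by (simp add: powr_realpow)
    also have "\<dots> = (2 powr (-s)) powr (real j)" by (simp add: powr_powr mult.commute)
    also have "\<dots> = (2 powr (-s))^j" by (simp add: powr_realpow)
    finally show ?thesis .
  qed
  ultimately show ?thesis by simp
qed

lemma A_sum:
  assumes "0 < r" "0 < s" "0 \<le> \<kappa>"
  shows "(\<Sum>j. ennreal (\<kappa> / ((2^j*r) powr s * mr x (2^j*r))) * emeasure M (ball x (2^(Suc j)*r)))
     \<le> ennreal (\<kappa> * C * r powr (-s) / (1 - 2 powr (-s)))"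
proof -
  have "ennreal (\<kappa> / ((2^j*r) powr s * mr x (2^j*r))) * emeasure M (ball x (2^(Suc j)*r))
       \<le> ennreal (\<kappa> * C * r powr (-s) * (2 powr (-s))^j)" for j
  proof -
    define \<rho> where "\<rho> = 2^j * r"
    have \<rho>: "0 < \<rho>" using assms by (simp add: \<rho>_def)
    have m: "0 < mr x \<rho>" using mr_pos[OF \<rho>] .
    have "\<kappa> / (\<rho> powr s * mr x \<rho>) * mr x (2*\<rho>) \<le> \<kappa> / (\<rho> powr s * mr x \<rho>) * (C * mr x \<rho>)"
      using mr_dbl[OF \<rho>, of x] assms m \<rho> by (intro mult_left_mono) auto
    also have "\<dots> = \<kappa> * C * \<rho> powr (-s)" using m \<rho> by (simp add: powr_minus field_simps)
    also have "\<dots> = \<kappa> * C * r powr (-s) * (2 powr (-s))^j"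
      using powr_dyadic[OF assms(1), of j s] by (simp add: \<rho>_def)
    finally have "\<kappa> / (\<rho> powr s * mr x \<rho>) * mr x (2*\<rho>) \<le> \<kappa> * C * r powr (-s) * (2 powr (-s))^j" .
    moreover have "2^(Suc j) * r = 2 * \<rho>" by (simp add: \<rho>_def)
    ultimately show ?thesis
      using assms m \<rho> mr_nonneg
      by (simp add: emb \<rho>_def[symmetric] ennreal_mult''[symmetric] ennreal_leI del: power_Suc)
  qed
  then show ?thesis
    using assms C1 by (intro enn_geom_bound) (auto simp: powr_minus divide_simps)
qed

lemma A_int:
  assumes "0 < r" "0 < s" "0 \<le> \<kappa>"
    and "AE y in M. h y \<le> (if r \<le> dist x y then ennreal (\<kappa> / (dist x y powr s * mr x (dist x y))) else 0)"
  shows "(\<integral>\<^sup>+y. h y \<partial>M) \<le> ennreal (\<kappa> * C * r powr (-s) / (1 - 2 powr (-s)))"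
proof -
  have "AE y in M. h y \<le> (\<Sum>j. ennreal (\<kappa> / ((2^j*r) powr s * mr x (2^j*r))) * indicator (ball x (2^(Suc j)*r)) y)
     + (\<Sum>k. ennreal 0 * indicator {} y) + ennreal 0 * indicator {} y"
    using assms(4)
  proof eventually_elim
    case (elim y)
    then show ?case
      using A_pt[OF assms(1) _ assms(3), of x y s] assms(2)
      by (cases "r \<le> dist x y") (auto split: if_splits intro: order_trans)
  qed
  from series_bound3[OF this]
  have "(\<integral>\<^sup>+y. h y \<partial>M) \<le> (\<Sum>j. ennreal (\<kappa> / ((2^j*r) powr s * mr x (2^j*r))) * emeasure M (ball x (2^(Suc j)*r)))"
    by simp
  also have "\<dots> \<le> ennreal (\<kappa> * C * r powr (-s) / (1 - 2 powr (-s)))"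
    by (rule A_sum[OF assms(1-3)])
  finally show ?thesis .
qed

lemma mr_dbl_pow: "0 < r \<Longrightarrow> mr x (2^k*r) \<le> C^k * mr x r"
proof (induction k)
  case 0 then show ?case by simp
next
  case (Suc k)
  have "mr x (2^Suc k * r) = mr x (2 * (2^k*r))" by (simp add: mult.assoc)
  also have "\<dots> \<le> C * mr x (2^k*r)" using Suc by (intro mr_dbl) auto
  also have "\<dots> \<le> C * (C^k * mr x r)" using Suc C1 by (intro mult_left_mono) auto
  finally show ?case by (simp add: mult.assoc)
qed

lemma sep_card_bound:
  fixes x0 :: 'a
  assumes R: "0 < R" and e: "0 < \<epsilon>"
  shows "\<exists>N::real. \<forall>T. finite T \<and> T \<subseteq> ball x0 R \<and> (\<forall>p\<in>T. \<forall>q\<in>T. p \<noteq> q \<longrightarrow> \<epsilon> \<le> dist p q)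
            \<longrightarrow> real (card T) \<le> N"
proof -
  obtain k where k: "2*R / (\<epsilon>/2) < 2^k" using real_arch_pow[of 2] by auto
  have k': "2*R \<le> 2^k * (\<epsilon>/2)" using k e by (simp add: field_simps)
  have m0: "0 < mr x0 R" using mr_pos[OF R] .
  have Ck: "0 < C^k" using C1 by simp
  show ?thesis
  proof (intro exI allI impI)
    fix T assume T: "finite T \<and> T \<subseteq> ball x0 R \<and> (\<forall>p\<in>T. \<forall>q\<in>T. p \<noteq> q \<longrightarrow> \<epsilon> \<le> dist p q)"
    have lb: "mr x0 R / C^k \<le> mr p (\<epsilon>/2)" if p: "p \<in> T" for p
    proof -
      have "dist x0 p < R" using p T by auto
      then have "ball x0 R \<subseteq> ball p (2^k * (\<epsilon>/2))"
      proof -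
        assume dp: "dist x0 p < R"
        show ?thesis
        proof
          fix w assume "w \<in> ball x0 R"
          then have "dist p w < 2*R" using dp dist_triangle[of p w x0] by (simp add: dist_commute)
          then show "w \<in> ball p (2^k * (\<epsilon>/2))" using k' by simp
        qed
      qed
      then have "emeasure M (ball x0 R) \<le> emeasure M (ball p (2^k * (\<epsilon>/2)))" by (intro emeasure_mono) auto
      then have "mr x0 R \<le> mr p (2^k * (\<epsilon>/2))" by (simp add: emb ennreal_le_iff mr_nonneg)
      also have "\<dots> \<le> C^k * mr p (\<epsilon>/2)" using e by (intro mr_dbl_pow) auto
      finally show ?thesis using Ck by (simp add: field_simps)
    qed
    have disj: "disjoint_family_on (\<lambda>p. ball p (\<epsilon>/2)) T"
      unfolding disjoint_family_on_def
    proof (intro ballI impI)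
      fix p q assume "p \<in> T" "q \<in> T" "p \<noteq> q"
      then have "\<epsilon> \<le> dist p q" using T by auto
      then show "ball p (\<epsilon>/2) \<inter> ball q (\<epsilon>/2) = {}"
      proof -
        assume epq: "\<epsilon> \<le> dist p q"
        show ?thesis
        proof (rule ccontr)
          assume "ball p (\<epsilon>/2) \<inter> ball q (\<epsilon>/2) \<noteq> {}"
          then obtain w where "dist p w < \<epsilon>/2" "dist q w < \<epsilon>/2" by auto
          then show False using dist_triangle[of p q w] epq by (simp add: dist_commute)
        qed
      qed
    qed
    have "(\<Sum>p\<in>T. emeasure M (ball p (\<epsilon>/2))) = emeasure M (\<Union>p\<in>T. ball p (\<epsilon>/2))"
      using T disj by (intro sum_emeasure) auto
    also have "\<dots> \<le> emeasure M (ball x0 (R+\<epsilon>))"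
    proof (intro emeasure_mono subsetI)
      fix w assume "w \<in> (\<Union>p\<in>T. ball p (\<epsilon>/2))"
      then obtain p where "p \<in> T" "dist p w < \<epsilon>/2" by auto
      moreover then have "dist x0 p < R" using T by auto
      ultimately show "w \<in> ball x0 (R+\<epsilon>)" using dist_triangle[of x0 w p] e by simp
    qed simp
    finally have "ennreal (\<Sum>p\<in>T. mr p (\<epsilon>/2)) \<le> ennreal (mr x0 (R+\<epsilon>))"
      by (simp add: emb sum_ennreal mr_nonneg)
    then have "(\<Sum>p\<in>T. mr p (\<epsilon>/2)) \<le> mr x0 (R+\<epsilon>)" by (simp add: ennreal_le_iff mr_nonneg)
    moreover have "real (card T) * (mr x0 R / C^k) \<le> (\<Sum>p\<in>T. mr p (\<epsilon>/2))"
      using sum_mono[of T "\<lambda>_. mr x0 R / C^k" "\<lambda>p. mr p (\<epsilon>/2)"] lb by simp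
    ultimately have "real (card T) * (mr x0 R / C^k) \<le> mr x0 (R+\<epsilon>)" by linarith
    then show "real (card T) \<le> mr x0 (R+\<epsilon>) * C^k / mr x0 R"
      using m0 Ck by (simp add: field_simps)
  qed
qed

lemma tot_bounded:
  fixes x0 :: 'a
  assumes "0 < \<epsilon>"
  shows "\<exists>F. finite F \<and> ball x0 R \<subseteq> (\<Union>f\<in>F. ball f \<epsilon>)"
proof (cases "0 < R")
  case False
  then show ?thesis by (intro exI[of _ "{}"]) (auto simp: ball_empty)
next
  case R: True
  from sep_card_bound[OF R assms, of x0]
  obtain N where N: "\<forall>T. finite T \<and> T \<subseteq> ball x0 R \<and> (\<forall>p\<in>T. \<forall>q\<in>T. p \<noteq> q \<longrightarrow> \<epsilon> \<le> dist p q)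
            \<longrightarrow> real (card T) \<le> N" by (elim exE)
  show ?thesis
  proof (rule ccontr)
    assume nc: "\<not> ?thesis"
    have ex: "\<exists>T. finite T \<and> T \<subseteq> ball x0 R \<and> (\<forall>p\<in>T. \<forall>q\<in>T. p \<noteq> q \<longrightarrow> \<epsilon> \<le> dist p q) \<and> card T = n" for n
    proof (induction n)
      case 0 then show ?case by (intro exI[of _ "{}"]) auto
    next
      case (Suc n)
      then obtain T where T: "finite T" "T \<subseteq> ball x0 R" "\<forall>p\<in>T. \<forall>q\<in>T. p \<noteq> q \<longrightarrow> \<epsilon> \<le> dist p q" "card T = n"
        by blast
      have "\<not> ball x0 R \<subseteq> (\<Union>f\<in>T. ball f \<epsilon>)" using nc T(1) by auto
      then obtain z where z: "z \<in> ball x0 R" "z \<notin> (\<Union>f\<in>T. ball f \<epsilon>)" by blast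
      then have zT: "z \<notin> T" using assms by auto
      have "\<forall>f\<in>T. \<epsilon> \<le> dist f z" using z by (auto simp: not_less)
      have "finite (insert z T)" "insert z T \<subseteq> ball x0 R" "card (insert z T) = Suc n"
        using T z zT by auto
      moreover have "\<forall>p\<in>insert z T. \<forall>q\<in>insert z T. p \<noteq> q \<longrightarrow> \<epsilon> \<le> dist p q"
        using T(3) \<open>\<forall>f\<in>T. \<epsilon> \<le> dist f z\<close> by (auto simp: dist_commute)
      ultimately show ?case by blast
    qed
    obtain T where T: "finite T" "T \<subseteq> ball x0 R" "\<forall>p\<in>T. \<forall>q\<in>T. p \<noteq> q \<longrightarrow> \<epsilon> \<le> dist p q" "card T = nat \<lceil>N\<rceil> + 1"
      using ex[of "nat \<lceil>N\<rceil> + 1"] by blast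
    have "real (card T) \<le> N" using N T(1-3) by blast
    moreover have "N < real (card T)" using T(4) by linarith
    ultimately show False by simp
  qed
qed

lemma null_lemma:
  assumes "T \<in> sets M"
  shows "AE z in M. \<not> (z \<in> T \<and> (\<exists>r>0. emeasure M (ball z r \<inter> T) = 0))"
proof -
  fix x0 :: 'a
  have "\<forall>n m. \<exists>F. finite F \<and> ball x0 (real m) \<subseteq> (\<Union>f\<in>F. ball f (1 / Suc n))"
    using tot_bounded by auto
  then obtain F where F: "\<And>n m. finite (F n m)" "\<And>n m. ball x0 (real m) \<subseteq> (\<Union>f\<in>F n m. ball f (1 / Suc n))"
    by metis
  define N where "N = (\<Union>n. \<Union>m. \<Union>f\<in>{f\<in>F n m. emeasure M (ball f (1 / Suc n) \<inter> T) = 0}. ball f (1 / Suc n) \<inter> T)"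
  have "N \<in> null_sets M"
    unfolding N_def using assms F(1)
    by (intro null_sets_UN null_sets_UN') (auto intro: countable_finite simp: null_sets_def)
  moreover have "{z \<in> space M. \<not> \<not> (z \<in> T \<and> (\<exists>r>0. emeasure M (ball z r \<inter> T) = 0))} \<subseteq> N"
  proof (intro subsetI)
    fix z assume "z \<in> {z \<in> space M. \<not> \<not> (z \<in> T \<and> (\<exists>r>0. emeasure M (ball z r \<inter> T) = 0))}"
    then obtain r where z: "z \<in> T" "0 < r" "emeasure M (ball z r \<inter> T) = 0" by auto
    obtain m :: nat where m: "dist x0 z < m" using reals_Archimedean2 by blast
    obtain n :: nat where n: "2 / r < n" using reals_Archimedean2 by blast
    have n2: "2 / Suc n < r" using n z(2) by (simp add: field_simps)
    from F(2)[of m n] m obtain f where f: "f \<in> F n m" "z \<in> ball f (1 / Suc n)" by auto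
    have sub: "ball f (1 / Suc n) \<subseteq> ball z r"
    proof
      fix w assume "w \<in> ball f (1 / Suc n)"
      then have "dist z w < 2 / Suc n" using f(2) dist_triangle[of z w f]
        by (auto simp: dist_commute)
      then show "w \<in> ball z r" using n2 by simp
    qed
    have "emeasure M (ball f (1 / Suc n) \<inter> T) \<le> emeasure M (ball z r \<inter> T)"
      using sub assms by (intro emeasure_mono) auto
    then have "emeasure M (ball f (1 / Suc n) \<inter> T) = 0" using z by simp
    then show "z \<in> N" unfolding N_def using f z by blast
  qed
  ultimately show ?thesis by (intro AE_I') auto
qed

end


locale main = bset +
  fixes E :: "'a set" and CL :: real and s t :: real
  assumes Emeas: "E \<in> sets M" and Ebdd: "bounded E" and CL1: "1 \<le> CL"
  and llc: "\<And>(x::'a) r y z. 0 < r \<Longrightarrow> y \<in> ball x r \<Longrightarrow> z \<in> ball x r \<Longrightarrow>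
              \<exists>K. connected K \<and> y \<in> K \<and> z \<in> K \<and> K \<subseteq> ball x (CL*r)"
  and s0: "0 < s" and st: "s < t"
  and mink: "upper_minkowski_content M t (reg_boundary M E) < \<infinity>"
begin

definition "O1 = {z. \<exists>r>0. emeasure M (ball z r \<inter> E) = 0}"
definition "O2 = {z. \<exists>r>0. emeasure M (ball z r \<inter> (-E)) = 0}"
definition "P = reg_boundary M E"
definition "W \<rho> = {x. \<exists>z\<in>P. dist x z < \<rho>}"
definition "g x y = \<bar>indicator E y - indicator E x\<bar> / (dist x y powr s * mr x (dist x y))"
definition "good x \<longleftrightarrow> \<not> (x \<in> E \<and> x \<in> O1) \<and> \<not> (x \<in> -E \<and> x \<in> O2)"
definition "Acoef = C / (1 - 2 powr (-s))"

lemma Acoef_pos: "0 < Acoef"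
  using C1 s0 by (simp add: Acoef_def powr_minus divide_simps)

lemma CE_sets: "-E \<in> sets M"
proof -
  have "space M - E \<in> sets M" using Emeas by auto
  then show ?thesis using space by (simp add: Compl_eq_Diff_UNIV)
qed

lemma open_Ox:
  assumes "T \<in> sets M"
  shows "open {z. \<exists>r>0. emeasure M (ball z r \<inter> T) = 0}"
  unfolding open_dist
proof (intro ballI)
  fix z assume "z \<in> {z. \<exists>r>0. emeasure M (ball z r \<inter> T) = 0}"
  then obtain r where r: "0 < r" "emeasure M (ball z r \<inter> T) = 0" by auto
  show "\<exists>e>0. \<forall>y. dist y z < e \<longrightarrow> y \<in> {z. \<exists>r>0. emeasure M (ball z r \<inter> T) = 0}"
  proof (intro exI[of _ r] conjI allI impI)
    fix y assume y: "dist y z < r"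
    have "ball y (r - dist y z) \<subseteq> ball z r"
    proof
      fix w assume "w \<in> ball y (r - dist y z)"
      then have "dist y w < r - dist y z" by simp
      then show "w \<in> ball z r" using dist_triangle[of z w y] by (simp add: dist_commute)
    qed
    then have "emeasure M (ball y (r - dist y z) \<inter> T) \<le> emeasure M (ball z r \<inter> T)"
      using assms by (intro emeasure_mono) auto
    then show "y \<in> {z. \<exists>r>0. emeasure M (ball z r \<inter> T) = 0}" using r y
      by (intro CollectI exI[of _ "r - dist y z"]) auto
  qed (use r in auto)
qed

lemma open_O1: "open O1" unfolding O1_def by (rule open_Ox[OF Emeas])
lemma open_O2: "open O2" unfolding O2_def by (rule open_Ox[OF CE_sets])

lemma O12_disj: "O1 \<inter> O2 = {}"
proof (rule ccontr)
  assume "O1 \<inter> O2 \<noteq> {}"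
  then obtain z r1 r2 where r: "0 < r1" "emeasure M (ball z r1 \<inter> E) = 0"
    "0 < r2" "emeasure M (ball z r2 \<inter> (-E)) = 0"
    unfolding O1_def O2_def by auto
  define r where "r = min r1 r2"
  have r0: "0 < r" using r by (simp add: r_def)
  have "emeasure M (ball z r \<inter> E) \<le> emeasure M (ball z r1 \<inter> E)"
    using Emeas by (intro emeasure_mono) (auto simp: r_def)
  then have a: "emeasure M (ball z r \<inter> E) = 0" using r by simp
  have "emeasure M (ball z r \<inter> (-E)) \<le> emeasure M (ball z r2 \<inter> (-E))"
    using CE_sets by (intro emeasure_mono) (auto simp: r_def)
  then have b: "emeasure M (ball z r \<inter> (-E)) = 0" using r by simp
  have "emeasure M (ball z r) = emeasure M (ball z r \<inter> E) + emeasure M (ball z r \<inter> (-E))"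
    using Emeas CE_sets by (subst plus_emeasure) (auto intro!: arg_cong[where f="emeasure M"])
  then have "emeasure M (ball z r) = 0" using a b by simp
  moreover have "0 < emeasure M (ball z r)" using mr_pos[OF r0, of z] by (simp add: emb)
  ultimately show False by simp
qed

lemma P_iff: "z \<in> P \<longleftrightarrow> z \<notin> O1 \<and> z \<notin> O2"
  unfolding P_def reg_boundary_def O1_def O2_def
  by (auto simp: Diff_eq zero_less_iff_neq_zero)

lemma AE_good: "AE x in M. good x"
  using null_lemma[OF Emeas] null_lemma[OF CE_sets]
  unfolding good_def O1_def O2_def by eventually_elim auto

lemma key:
  assumes "good x" "good y" "indicator E y \<noteq> (indicator E x :: real)" "dist x y < r"
  shows "x \<in> W (CL*r)"
proof -
  have r: "0 < r" using assms(4) zero_le_dist[of x y] by linarith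
  obtain K where K: "connected K" "x \<in> K" "y \<in> K" "K \<subseteq> ball x (CL*r)"
    using llc[of r x x y] r assms(4) by auto
  have "\<exists>z\<in>K. z \<notin> O1 \<and> z \<notin> O2"
  proof (cases "x \<in> E")
    case True
    then have "y \<notin> E" using assms(3) by (auto simp: indicator_def split: if_splits)
    then have "x \<notin> O1" "y \<notin> O2" using assms(1,2) True by (auto simp: good_def)
    then show ?thesis using connected_meets_gap[OF open_O1 open_O2 O12_disj K(1,2,3)] by auto
  next
    case False
    then have "y \<in> E" using assms(3) by (auto simp: indicator_def split: if_splits)
    then have "x \<notin> O2" "y \<notin> O1" using assms(1,2) False by (auto simp: good_def)
    moreover have "O2 \<inter> O1 = {}" using O12_disj by auto
    ultimately show ?thesis using connected_meets_gap[OF open_O2 open_O1 _ K(1,2,3)] by auto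
  qed
  then obtain z where "z \<in> K" "z \<in> P" using P_iff by auto
  then show ?thesis using K(4) unfolding W_def by (auto simp: subset_iff)
qed

lemma I1:
  assumes "good x" "0 < r" "x \<notin> W (CL*r)"
  shows "(\<integral>\<^sup>+y. ennreal (g x y) \<partial>M) \<le> ennreal (Acoef * r powr (-s))"
proof -
  have "AE y in M. ennreal (g x y) \<le> (if r \<le> dist x y then ennreal (1 / (dist x y powr s * mr x (dist x y))) else 0)"
    using AE_good
  proof eventually_elim
    case (elim y)
    show ?case
    proof (cases "indicator E y = (indicator E x :: real)")
      case True
      then show ?thesis by (simp add: g_def)
    next
      case False
      then have "r \<le> dist x y" using key[OF assms(1) elim False] assms(3) by force
      moreover have "\<bar>indicator E y - indicator E x\<bar> = (1::real)"
        using False by (auto simp: indicator_def split: if_splits)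
      ultimately show ?thesis by (simp add: g_def)
    qed
  qed
  from A_int[OF assms(2) s0 _ this] show ?thesis by (simp add: Acoef_def)
qed


lemma union_bound_count:
  assumes "countable X" "\<And>x. open (A x)"
  shows "emeasure M (\<Union>x\<in>X. A x) \<le> (\<integral>\<^sup>+x. emeasure M (A x) \<partial>count_space X)"
proof -
  have op: "open (\<Union>x\<in>X. A x)" using assms(2) by auto
  have "emeasure M (\<Union>x\<in>X. A x) = (\<integral>\<^sup>+y. indicator (\<Union>x\<in>X. A x) y \<partial>M)"
    using open_sets[OF op] by simp
  also have "\<dots> \<le> (\<integral>\<^sup>+y. (\<integral>\<^sup>+x. indicator (A x) y \<partial>count_space X) \<partial>M)"
  proof (intro nn_integral_mono)
    fix y
    show "indicator (\<Union>x\<in>X. A x) y \<le> (\<integral>\<^sup>+x. indicator (A x) y \<partial>count_space X)"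
    proof (cases "y \<in> (\<Union>x\<in>X. A x)")
      case True
      then obtain x where "x \<in> X" "y \<in> A x" by auto
      then show ?thesis using nn_integral_ge_point[of x X "\<lambda>x. indicator (A x) y"] True by simp
    qed simp
  qed
  also have "\<dots> = (\<integral>\<^sup>+x. (\<integral>\<^sup>+y. indicator (A x) y \<partial>M) \<partial>count_space X)"
    using assms open_sets by (intro nn_integral_count_space_nn_integral) auto
  also have "\<dots> = (\<integral>\<^sup>+x. emeasure M (A x) \<partial>count_space X)"
    using assms open_sets by (intro nn_integral_cong) auto
  finally show ?thesis .
qed

lemma mink_bound:
  "\<exists>K \<rho>0. 0 < \<rho>0 \<and> 0 \<le> K \<and> (\<forall>\<rho>. 0 < \<rho> \<longrightarrow> \<rho> < \<rho>0 \<longrightarrow> emeasure M (W \<rho>) \<le> ennreal (C * K * \<rho> powr t))"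
proof -
  define L where "L = upper_minkowski_content M t P"
  have Lfin: "L < \<infinity>" using mink by (simp add: L_def P_def)
  define K where "K = enn2real L + 1"
  have K0: "0 \<le> K" by (simp add: K_def)
  have "L < ennreal K" using Lfin unfolding K_def
    by (cases L) (auto simp: ennreal_less_iff)
  then have "eventually (\<lambda>\<rho>. minkowski_r_content M t \<rho> P < ennreal K) (at_right 0)"
    unfolding L_def upper_minkowski_content_def by (rule Limsup_lessD)
  then obtain \<rho>0 where \<rho>0: "0 < \<rho>0" "\<And>\<rho>. 0 < \<rho> \<Longrightarrow> \<rho> < \<rho>0 \<Longrightarrow> minkowski_r_content M t \<rho> P < ennreal K"
    unfolding eventually_at_right_field by auto
  have "emeasure M (W \<rho>) \<le> ennreal (C * K * \<rho> powr t)" if \<rho>: "0 < \<rho>" "\<rho> < \<rho>0" for \<rho>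
  proof -
    from \<rho>0(2)[OF \<rho>] obtain X where X: "countable X" "X \<subseteq> P" "P \<subseteq> (\<Union>x\<in>X. ball x \<rho>)"
      and XK: "ennreal (\<rho> powr (-t)) * (\<integral>\<^sup>+ x. emeasure M (ball x \<rho>) \<partial>count_space X) < ennreal K"
      unfolding minkowski_r_content_def by (auto simp: INF_less_iff)
    define S where "S = (\<integral>\<^sup>+ x. emeasure M (ball x \<rho>) \<partial>count_space X)"
    have "S = ennreal (\<rho> powr t) * (ennreal (\<rho> powr (-t)) * S)"
      using \<rho> by (simp add: mult.assoc[symmetric] ennreal_mult''[symmetric] powr_add[symmetric])
    also have "\<dots> \<le> ennreal (\<rho> powr t) * ennreal K"
      using XK by (intro mult_left_mono) (auto simp: S_def)
    finally have SK: "S \<le> ennreal (K * \<rho> powr t)" using K0 by (simp add: ennreal_mult'' mult.commute)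
    have "W \<rho> \<subseteq> (\<Union>x\<in>X. ball x (2*\<rho>))"
    proof
      fix w assume "w \<in> W \<rho>"
      then obtain z where z: "z \<in> P" "dist w z < \<rho>" by (auto simp: W_def)
      then obtain x where x: "x \<in> X" "dist x z < \<rho>" using X(3) by auto
      have "dist x w < 2*\<rho>" using z x dist_triangle[of x w z] by (simp add: dist_commute)
      then show "w \<in> (\<Union>x\<in>X. ball x (2*\<rho>))" using x by auto
    qed
    then have "emeasure M (W \<rho>) \<le> emeasure M (\<Union>x\<in>X. ball x (2*\<rho>))"
      using open_sets[of "\<Union>x\<in>X. ball x (2*\<rho>)"] by (intro emeasure_mono) auto
    also have "\<dots> \<le> (\<integral>\<^sup>+x. emeasure M (ball x (2*\<rho>)) \<partial>count_space X)"
      using X(1) by (intro union_bound_count) auto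
    also have "\<dots> \<le> (\<integral>\<^sup>+x. ennreal C * emeasure M (ball x \<rho>) \<partial>count_space X)"
      using \<rho> dbl by (intro nn_integral_mono) auto
    also have "\<dots> = ennreal C * S" unfolding S_def by (simp add: nn_integral_cmult)
    also have "\<dots> \<le> ennreal C * ennreal (K * \<rho> powr t)" using SK by (intro mult_left_mono) auto
    also have "\<dots> = ennreal (C * K * \<rho> powr t)" using C1 K0 by (simp add: ennreal_mult[symmetric] mult.assoc)
    finally show ?thesis .
  qed
  then show ?thesis using \<rho>0(1) K0 by blast
qed


lemma powr_div_pow: "0 < (r::real) \<Longrightarrow> (r / 2^k) powr a = r powr a * (2 powr (-a))^k"
proof -
  assume r: "0 < r"
  have "(r / 2^k) powr a = r powr a / (2^k) powr a" using r by (simp add: powr_divide)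
  moreover have "((2::real)^k) powr a = (2 powr a)^k"
  proof -
    have "((2::real)^k) powr a = (2 powr (real k)) powr a" by (simp add: powr_realpow)
    also have "\<dots> = (2 powr a) powr (real k)" by (simp add: powr_powr mult.commute)
    also have "\<dots> = (2 powr a)^k" by (simp add: powr_realpow)
    finally show ?thesis .
  qed
  ultimately show ?thesis by (simp add: powr_minus power_inverse divide_inverse)
qed

lemma P_near_E: "z \<in> P \<Longrightarrow> \<exists>e\<in>E. dist z e < 1"
proof -
  assume "z \<in> P"
  then have "0 < emeasure M (ball z 1 \<inter> E)" unfolding P_def reg_boundary_def by auto
  then have "ball z 1 \<inter> E \<noteq> {}" by auto
  then show ?thesis by auto
qed

lemma W_mono: "\<rho> \<le> \<rho>' \<Longrightarrow> W \<rho> \<subseteq> W \<rho>'"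
  unfolding W_def by force

lemma W_open: "open (W \<rho>)"
proof -
  have "W \<rho> = (\<Union>z\<in>P. ball z \<rho>)" unfolding W_def by (auto simp: dist_commute)
  then show ?thesis by auto
qed

lemma W_sets: "W \<rho> \<in> sets M" using W_open open_sets by auto

lemma W_fin: "emeasure M (W \<rho>) < \<infinity>"
proof -
  obtain x0 R0 where "E \<subseteq> ball x0 R0" using Ebdd bounded_subset_ballD by blast
  have "W \<rho> \<subseteq> ball x0 (R0 + 1 + \<rho>)"
  proof
    fix w assume "w \<in> W \<rho>"
    then obtain z where z: "z \<in> P" "dist w z < \<rho>" by (auto simp: W_def)
    then obtain e where e: "e \<in> E" "dist z e < 1" using P_near_E by auto
    have "dist x0 e < R0" using e \<open>E \<subseteq> ball x0 R0\<close> by auto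
    then show "w \<in> ball x0 (R0 + 1 + \<rho>)"
      using z e dist_triangle[of x0 w e] dist_triangle[of e w z] by (simp add: dist_commute)
  qed
  then have "emeasure M (W \<rho>) \<le> emeasure M (ball x0 (R0 + 1 + \<rho>))"
    by (intro emeasure_mono) auto
  also have "\<dots> < \<infinity>" by (rule fin_all)
  finally show ?thesis .
qed

definition "acf k = Acoef * 2 powr (s * Suc k)"

lemma S1_fin: "(\<Sum>k. ennreal (acf k) * emeasure M (W (CL / 2^k))) < \<infinity>"
proof -
  obtain K \<rho>0 where K: "0 < \<rho>0" "0 \<le> K"
    "\<And>\<rho>. 0 < \<rho> \<Longrightarrow> \<rho> < \<rho>0 \<Longrightarrow> emeasure M (W \<rho>) \<le> ennreal (C * K * \<rho> powr t)"
    using mink_bound by blast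
  obtain k0 where k0: "CL / \<rho>0 < 2^k0" using real_arch_pow[of 2] by auto
  define q where "q = (2::real) powr (s - t)"
  have q: "0 < q" "q < 1" using st by (auto simp: q_def powr_less_one)
  define mW where "mW = measure M (W CL)"
  have mW: "emeasure M (W CL) = ennreal mW" "0 \<le> mW"
    using W_fin[of CL] by (auto simp: mW_def emeasure_eq_ennreal_measure less_top)
  define B1 where "B1 = Acoef * 2 powr s * C * K * CL powr t"
  define B2 where "B2 = Acoef * 2 powr (s * Suc k0) * mW / q^k0"
  have B1: "0 \<le> B1" using Acoef_pos C1 K by (simp add: B1_def)
  have B2: "0 \<le> B2" using Acoef_pos mW q by (simp add: B2_def)
  have "ennreal (acf k) * emeasure M (W (CL / 2^k)) \<le> ennreal (max B1 B2 * q^k)" for k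
  proof (cases "k0 \<le> k")
    case True
    have "CL / 2^k \<le> CL / 2^k0" using True CL1 by (intro divide_left_mono) auto
    also have "\<dots> < \<rho>0" using k0 K(1) by (simp add: field_simps)
    finally have lt: "CL / 2^k < \<rho>0" .
    have "ennreal (acf k) * emeasure M (W (CL / 2^k)) \<le> ennreal (acf k) * ennreal (C * K * (CL / 2^k) powr t)"
      using K(3)[OF _ lt] CL1 by (intro mult_left_mono) auto
    also have "\<dots> = ennreal (acf k * (C * K * (CL / 2^k) powr t))"
    proof -
      have "0 \<le> acf k" using Acoef_pos by (simp add: acf_def)
      moreover have "0 \<le> C * K * (CL / 2^k) powr t" using C1 K(2) by simp
      ultimately show ?thesis by (simp add: ennreal_mult[symmetric])
    qed
    also have "acf k * (C * K * (CL / 2^k) powr t) = B1 * q^k"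
    proof -
      have "acf k * (C * K * (CL / 2^k) powr t)
          = Acoef * 2 powr (s * Suc k) * (C * K * (CL powr t * (2 powr (-t))^k))"
        using CL1 by (simp add: acf_def powr_div_pow)
      also have "2 powr (s * Suc k) = 2 powr s * (2 powr s)^k"
        by (simp add: powr_add powr_realpow[symmetric] powr_powr algebra_simps)
      also have "(2 powr s)^k * (2 powr (-t))^k = q^k"
        by (simp add: q_def power_mult_distrib[symmetric] powr_add[symmetric])
      ultimately show ?thesis unfolding B1_def by (simp add: algebra_simps)
    qed
    also have "B1 * q^k \<le> max B1 B2 * q^k" using q by (intro mult_right_mono) auto
    finally show ?thesis by (simp add: ennreal_leI)
  next
    case False
    have "ennreal (acf k) * emeasure M (W (CL / 2^k)) \<le> ennreal (acf k) * emeasure M (W CL)"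
      using CL1 by (intro mult_left_mono emeasure_mono W_mono W_sets) (auto simp: field_simps)
    also have "\<dots> = ennreal (acf k * mW)" using mW Acoef_pos by (simp add: ennreal_mult''[symmetric] acf_def)
    also have "acf k * mW \<le> B2 * q^k0"
    proof -
      have "acf k \<le> Acoef * 2 powr (s * Suc k0)"
        using False Acoef_pos s0 by (auto simp: acf_def intro!: mult_left_mono)
      then show ?thesis using mW q by (simp add: B2_def mult_right_mono)
    qed
    also have "\<dots> \<le> B2 * q^k" using False q B2 by (intro mult_left_mono power_decreasing) auto
    also have "\<dots> \<le> max B1 B2 * q^k" using q by (intro mult_right_mono) auto
    finally show ?thesis by (simp add: ennreal_leI)
  qed
  then have "(\<Sum>k. ennreal (acf k) * emeasure M (W (CL / 2^k))) \<le> ennreal (max B1 B2 / (1 - q))"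
    using q B1 by (intro enn_geom_bound) auto
  also have "\<dots> < \<infinity>" by simp
  finally show ?thesis .
qed


lemma acf_ge: "Acoef \<le> acf k"
proof -
  have "1 \<le> 2 powr (s * Suc k)" using s0 by (intro ge_one_powr_ge_zero) auto
  then show ?thesis using Acoef_pos unfolding acf_def
    by (metis mult.right_neutral mult_left_mono less_imp_le)
qed

lemma acf_pow: "Acoef * (1 / 2^Suc k) powr (-s) = acf k"
proof -
  have "(1 / 2^Suc k) powr (-s) = (2 powr s)^Suc k"
    using powr_div_pow[of 1 "Suc k" "-s"] by simp
  also have "\<dots> = 2 powr (s * Suc k)"
    by (simp add: powr_realpow[symmetric] powr_powr del: power_Suc)
  finally show ?thesis by (simp add: acf_def del: power_Suc)
qed

lemma besov_eq: "besov_norm M s (indicator E) = (\<integral>\<^sup>+x. (\<integral>\<^sup>+y. ennreal (g x y) \<partial>M) \<partial>M)"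
  unfolding besov_norm_def
proof (intro nn_integral_cong)
  fix x y :: 'a
  show "ennreal \<bar>indicator E y - indicator E x\<bar> / (ennreal (dist x y powr s) * emeasure M (ball x (dist x y)))
      = ennreal (g x y)"
  proof (cases "x = y")
    case True
    then show ?thesis by (simp add: g_def)
  next
    case False
    then have d: "0 < dist x y" by simp
    have m: "0 < mr x (dist x y)" using mr_pos[OF d] .
    have "ennreal (dist x y powr s) * emeasure M (ball x (dist x y)) = ennreal (dist x y powr s * mr x (dist x y))"
      using m by (simp add: emb ennreal_mult[symmetric])
    moreover have "0 < dist x y powr s * mr x (dist x y)" using d m by simp
    ultimately show ?thesis by (simp add: g_def divide_ennreal)
  qed
qed

lemma far_bound:
  assumes "E \<subseteq> ball x0 R0" "0 < R0" "2 * R0 \<le> dist x0 x"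
  shows "(\<integral>\<^sup>+y. ennreal (g x y) \<partial>M) \<le>
     ennreal ((2 powr s * C^2 * measure M E) / (dist x0 x powr s * mr x0 (dist x0 x)))"
proof -
  define \<rho> where "\<rho> = dist x0 x"
  have \<rho>: "0 < \<rho>" using assms unfolding \<rho>_def by linarith
  have xE: "x \<notin> E" using assms by (auto simp: \<rho>_def dist_commute)
  have m0: "0 < mr x0 \<rho>" using mr_pos[OF \<rho>] .
  define Q where "Q = 2 powr s * C^2 / (\<rho> powr s * mr x0 \<rho>)"
  have Q0: "0 \<le> Q" using m0 \<rho> by (simp add: Q_def)
  have pt: "g x y \<le> Q * indicator E y" for y
  proof (cases "y \<in> E")
    case False
    then show ?thesis using xE by (simp add: g_def)
  next
    case True
    define d where "d = dist x y"
    have "dist x0 y < R0" using True assms by auto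
    then have dd: "\<rho>/2 \<le> d" using assms dist_triangle[of x0 x y] by (simp add: \<rho>_def d_def dist_commute)
    have h2: "0 < \<rho>/2" using \<rho> by simp
    have sub: "ball x0 \<rho> \<subseteq> ball x (2*\<rho>)"
    proof
      fix w assume "w \<in> ball x0 \<rho>"
      then show "w \<in> ball x (2*\<rho>)" using dist_triangle[of x w x0] by (simp add: \<rho>_def dist_commute)
    qed
    have "mr x0 \<rho> \<le> mr x (2*\<rho>)"
      using emeasure_mono[OF sub, of M] by (simp add: emb ennreal_le_iff mr_nonneg)
    also have "\<dots> \<le> C * mr x \<rho>" using mr_dbl[OF \<rho>] .
    also have "mr x \<rho> \<le> C * mr x (\<rho>/2)" using mr_dbl[OF h2, of x] by simp
    also have "mr x (\<rho>/2) \<le> mr x d" using dd by (rule mr_mono)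
    finally have mm: "mr x0 \<rho> \<le> C^2 * mr x d" using C1 by (simp add: power2_eq_square mult.assoc mult_left_mono)
    have "\<rho> powr s = 2 powr s * (\<rho>/2) powr s" using \<rho> by (simp add: powr_divide)
    also have "(\<rho>/2) powr s \<le> d powr s" using dd h2 s0 by (intro powr_mono2) auto
    finally have pp: "\<rho> powr s \<le> 2 powr s * d powr s" by simp
    have md: "0 < mr x d" using mr_pos h2 dd by simp
    have d0: "0 < d" using h2 dd by simp
    have "\<rho> powr s * mr x0 \<rho> \<le> (2 powr s * d powr s) * (C^2 * mr x d)"
      using pp mm m0 \<rho> by (intro mult_mono) auto
    then have "1 / (d powr s * mr x d) \<le> 2 powr s * C^2 / (\<rho> powr s * mr x0 \<rho>)"
      using md d0 m0 \<rho> by (simp add: field_simps)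
    moreover have "g x y = 1 / (d powr s * mr x d)" using True xE by (simp add: g_def d_def)
    ultimately show ?thesis using True by (simp add: Q_def)
  qed
  have mE: "emeasure M E = ennreal (measure M E)"
  proof -
    have "emeasure M E \<le> emeasure M (ball x0 R0)" using assms Emeas by (intro emeasure_mono) auto
    then have "emeasure M E < \<infinity>" using fin_all[of x0 R0] by auto
    then show ?thesis by (simp add: emeasure_eq_ennreal_measure less_top)
  qed
  have "(\<integral>\<^sup>+y. ennreal (g x y) \<partial>M) \<le> (\<integral>\<^sup>+y. ennreal Q * indicator E y \<partial>M)"
  proof (intro nn_integral_mono)
    fix y
    show "ennreal (g x y) \<le> ennreal Q * indicator E y"
      using pt[of y] Q0 by (cases "y \<in> E") (auto simp: ennreal_leI ennreal_eq_0_iff)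
  qed
  also have "\<dots> = ennreal Q * emeasure M E" using Emeas by (simp add: nn_integral_cmult_indicator)
  also have "\<dots> = ennreal (Q * measure M E)" using Q0 by (simp add: mE ennreal_mult[symmetric])
  also have "Q * measure M E = (2 powr s * C^2 * measure M E) / (\<rho> powr s * mr x0 \<rho>)"
    by (simp add: Q_def)
  finally show ?thesis by (simp add: \<rho>_def)
qed


lemma main_bound: "(\<integral>\<^sup>+x. (\<integral>\<^sup>+y. ennreal (g x y) \<partial>M) \<partial>M) < \<infinity>"
proof -
  obtain x0 R0 where R0: "0 < R0" "E \<subseteq> ball x0 R0" using Ebdd bounded_subset_ballD by blast
  define r0 where "r0 = 2 * R0"
  have r0: "0 < r0" using R0 by (simp add: r0_def)
  define Kf where "Kf = 2 powr s * C^2 * measure M E"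
  have Kf: "0 \<le> Kf" by (simp add: Kf_def)
  define b where "b j = Kf / ((2^j*r0) powr s * mr x0 (2^j*r0))" for j :: nat
  define F where "F x = (\<integral>\<^sup>+y. ennreal (g x y) \<partial>M)" for x
  have "AE x in M. F x \<le> (\<Sum>k. ennreal (acf k) * indicator (W (CL/2^k)) x)
      + (\<Sum>j. ennreal (b j) * indicator (ball x0 (2^Suc j * r0)) x) + ennreal Acoef * indicator (ball x0 r0) x"
    using AE_good
  proof eventually_elim
    case (elim x)
    let ?S1 = "(\<Sum>k. ennreal (acf k) * indicator (W (CL/2^k)) x)"
    let ?S2 = "(\<Sum>j. ennreal (b j) * indicator (ball x0 (2^Suc j * r0)) x)"
    let ?T = "ennreal Acoef * indicator (ball x0 r0) x"
    show ?case
    proof (cases "x \<in> W CL")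
      case True
      show ?thesis
      proof (cases "\<forall>k. x \<in> W (CL/2^k)")
        case True
        then have S1: "?S1 = (\<Sum>k. ennreal (acf k))" by simp
        have "(\<Sum>k. ennreal (acf k)) = top"
        proof (rule ccontr)
          assume "(\<Sum>k. ennreal (acf k)) \<noteq> top"
          then have "summable acf" using Acoef_pos acf_ge
            by (intro summable_suminf_not_top) (auto intro: order_trans[OF less_imp_le])
          then have "acf \<longlonglongrightarrow> 0" by (rule summable_LIMSEQ_zero)
          then have "eventually (\<lambda>k. acf k < Acoef) sequentially"
            using Acoef_pos by (intro order_tendstoD) auto
          then obtain k where "acf k < Acoef" using eventually_sequentially by auto
          then show False using acf_ge[of k] by simp
        qed
        then show ?thesis using S1 by simp
      next
        case False
        then have "\<exists>k. x \<notin> W (CL/2^k)" by auto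
        from exists_least_lemma[where P="\<lambda>k. x \<notin> W (CL/2^k)", OF _ this]
        obtain n where n: "x \<in> W (CL/2^n)" "x \<notin> W (CL/2^Suc n)" using True by auto
        have "x \<notin> W (CL * (1/2^Suc n))" using n(2) by simp
        from I1[OF elim _ this] have "F x \<le> ennreal (acf n)"
          by (simp add: F_def acf_pow del: power_Suc)
        also have "\<dots> = ennreal (acf n) * indicator (W (CL/2^n)) x" using n(1) by simp
        also have "\<dots> \<le> ?S1" by (rule enn_term_le_suminf[of "\<lambda>k. ennreal (acf k) * indicator (W (CL/2^k)) x"])
        also have "\<dots> \<le> ?S1 + ?S2 + ?T" by (simp add: add.assoc)
        finally show ?thesis .
      qed
    next
      case False
      show ?thesis
      proof (cases "x \<in> ball x0 r0")
        case True
        have "x \<notin> W (CL * 1)" using False by simp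
        from I1[OF elim _ this] have "F x \<le> ennreal Acoef" by (simp add: F_def)
        also have "\<dots> = ?T" using True by simp
        also have "\<dots> \<le> ?S1 + ?S2 + ?T" by simp
        finally show ?thesis .
      next
        case xf: False
        then have d: "r0 \<le> dist x0 x" by simp
        have "F x \<le> ennreal (Kf / (dist x0 x powr s * mr x0 (dist x0 x)))"
          unfolding F_def Kf_def using far_bound[OF R0(2) R0(1)] d by (simp add: r0_def)
        also have "\<dots> \<le> ?S2" unfolding b_def by (rule A_pt[OF r0 d Kf less_imp_le[OF s0]])
        also have "\<dots> \<le> ?S1 + ?S2 + ?T" by (simp add: add.commute add.left_commute)
        finally show ?thesis .
      qed
    qed
  qed
  from series_bound3[OF this W_sets ball_sets ball_sets]
  have "(\<integral>\<^sup>+x. F x \<partial>M) \<le> (\<Sum>k. ennreal (acf k) * emeasure M (W (CL/2^k)))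
      + (\<Sum>j. ennreal (b j) * emeasure M (ball x0 (2^Suc j * r0))) + ennreal Acoef * emeasure M (ball x0 r0)" .
  also have "\<dots> < \<infinity>"
  proof -
    have "(\<Sum>j. ennreal (b j) * emeasure M (ball x0 (2^Suc j * r0))) \<le> ennreal (Kf * C * r0 powr (-s) / (1 - 2 powr (-s)))"
      unfolding b_def by (rule A_sum[OF r0 s0 Kf])
    then have "(\<Sum>j. ennreal (b j) * emeasure M (ball x0 (2^Suc j * r0))) < \<infinity>"
      using le_less_trans by fastforce
    moreover have "ennreal Acoef * emeasure M (ball x0 r0) < \<infinity>"
      using fin_all[of x0 r0] by (simp add: ennreal_mult_less_top)
    ultimately show ?thesis using S1_fin by simp
  qed
  finally show ?thesis by (simp add: F_def)
qed

end

theorem theorem1p1: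
  fixes M :: "'a::metric_space measure" and E :: "'a set" and t :: real
  assumes "LLC1 (UNIV :: 'a set)"
    and "doubling_measure M"
    and "borel_regular M"
    and "bounded E" and "E \<in> sets M"
    and "t > 0"
    and "upper_minkowski_content M t (reg_boundary M E) < \<infinity>"
  shows "\<forall>s. 0 < s \<and> s < 1 \<and> s < t \<longrightarrow> in_besov M s (indicator E :: 'a \<Rightarrow> real)"
proof (intro allI impI)
  fix s :: real assume s: "0 < s \<and> s < 1 \<and> s < t"
  obtain C where C: "C \<ge> 1" "\<And>x r. r > 0 \<Longrightarrow> 0 < emeasure M (ball x (2*r)) \<and>
        emeasure M (ball x (2*r)) \<le> ennreal C * emeasure M (ball x r) \<and>
        emeasure M (ball x r) < \<infinity>"
    using assms(2) unfolding doubling_measure_def by blast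
  obtain CL where CL1: "CL \<ge> 1" and H: "\<forall>x\<in>(UNIV::'a set). \<forall>r>0. \<forall>y\<in>ball x r \<inter> UNIV. \<forall>z\<in>ball x r \<inter> UNIV.
        \<exists>K. connected K \<and> y \<in> K \<and> z \<in> K \<and> K \<subseteq> ball x (CL*r) \<inter> UNIV"
    using assms(1) unfolding LLC1_def by blast
  have CL: "CL \<ge> 1" "\<And>(x::'a) r y z. r > 0 \<Longrightarrow> y \<in> ball x r \<Longrightarrow> z \<in> ball x r \<Longrightarrow>
        \<exists>K. connected K \<and> y \<in> K \<and> z \<in> K \<and> K \<subseteq> ball x (CL*r)"
  proof -
    show "CL \<ge> 1" by (rule CL1)
  next
    fix x :: 'a and r y z assume a: "(r::real) > 0" "y \<in> ball x r" "z \<in> ball x r"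
    have H': "\<forall>(x::'a) r. r > 0 \<longrightarrow> (\<forall>y\<in>ball x r. \<forall>z\<in>ball x r.
        \<exists>K. connected K \<and> y \<in> K \<and> z \<in> K \<and> K \<subseteq> ball x (CL*r))"
      using H by simp
    show "\<exists>K. connected K \<and> y \<in> K \<and> z \<in> K \<and> K \<subseteq> ball x (CL*r)"
      using H'[rule_format, OF a] .
  qed
  have sp: "space M = UNIV" "sets borel \<subseteq> sets M" using assms(3) unfolding borel_regular_def by auto
  interpret main M C E CL s t
    using C CL sp s assms(4,5,7) by unfold_locales auto
  have "emeasure M E < \<infinity>"
  proof -
    obtain x0 R0 where "E \<subseteq> ball x0 R0" using assms(4) bounded_subset_ballD by blast
    then have "emeasure M E \<le> emeasure M (ball x0 R0)" using assms(5) by (intro emeasure_mono) auto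
    then show ?thesis using fin_all[of x0 R0] by auto
  qed
  then have "integrable M (indicator E :: 'a \<Rightarrow> real)"
    using assms(5) sp by (simp add: integrable_indicator_iff)
  moreover have "besov_norm M s (indicator E) < \<infinity>"
    using besov_eq main_bound by simp
  ultimately show "in_besov M s (indicator E :: 'a \<Rightarrow> real)" by (simp add: in_besov_def)
qed

end
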